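(* For all sufficiently large $n$ one has $k_n>0$; setting $u_n=k_n^{1/2}\langle k_n\theta\rangle$ and $v_n=k_n^{1/2}\langle k_n\theta^2\rangle$ for such $n$, $$\lim_{n\to\infty}\Big((\theta u_n-2v_n)^2+(3\theta^2-4p)u_n^2\Big)=\frac{4d^3}{3\theta^2-p};$$ that is, the points $(u_n,v_n)$ approach the ellipse $(\theta x-2y)^2+(3\theta^2-4p)x^2=\frac{4d^3}{3\theta^2-p}$.
   Context: Standing setup: $p,q\in\mathbb{Z}$ are such that $x^3-px-q$ is irreducible over $\mathbb{Q}$ with exactly one real root $\theta$ (one has $3\theta^2-4p>0$ and $3\theta^2-p>0$). $K=\mathbb{Q}(\theta)\subset\mathbb{R}$, $\mathcal{O}_K$ its ring of integers. $d$ is a positive integer with $\mathcal{O}_K\subseteq\frac1d\mathbb{Z}[\theta]$. $\lambda\in\mathcal{O}_K$ is a unit with $\lambda>1$. For $n\ge1$ the rationals $a_n,b_n,c_n$ are defined by $a_n+b_n\theta+c_n\theta^2=\lambda^n$, and $k_n=dc_n$. For $x\in\mathbb{R}$, $\langle x\rangle=x-\lfloor x+\tfrac12\rfloor$. *)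

theory Defs
  imports "HOL-Analysis.Analysis" "HOL-Computational_Algebra.Polynomial"
begin

definition alg_int :: "real \<Rightarrow> bool" where
  "alg_int x \<longleftrightarrow> (\<exists>P :: int poly. lead_coeff P = 1 \<and> poly (map_poly of_int P) x = 0)"

definition numfield :: "real \<Rightarrow> real set" where
  "numfield \<theta> = {x. \<exists>r0 r1 r2 :: rat. x = of_rat r0 + of_rat r1 * \<theta> + of_rat r2 * \<theta>^2}"

definition ring_of_integers :: "real \<Rightarrow> real set" where
  "ring_of_integers \<theta> = {x \<in> numfield \<theta>. alg_int x}"

definition nidist :: "real \<Rightarrow> real" where
  "nidist x = x - of_int \<lfloor>x + 1/2\<rfloor>"

end

theory Submission
  imports Defs Jordan_Normal_Form.Char_Poly
begin

lemma alg_int_pow: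
  assumes "alg_int x" shows "alg_int (x^n)"
proof -
  obtain P :: "int poly" where P1: "lead_coeff P = 1" and P2: "poly (map_poly of_int P) x = 0"
    using assms unfolding alg_int_def by blast
  define m where "m = degree P"
  have m0: "m > 0"
  proof (rule ccontr)
    assume "\<not> m > 0"
    then have "degree P = 0" using m_def by simp
    then have "P = [:1:]" using P1 by (metis leading_coeff_0_iff pCons_0_0 degree_0_id one_pCons)
    then show False using P2 by simp
  qed
  define Ai :: "int mat" where "Ai = mat m m (\<lambda>(j,k). if Suc j < m then (if k = Suc j then 1 else 0) else - coeff P k)"
  define A :: "real mat" where "A = map_mat of_int Ai"
  define v :: "real vec" where "v = vec m (\<lambda>j. x^j)"
  have Ai: "Ai \<in> carrier_mat m m" unfolding Ai_def by simp
  have A: "A \<in> carrier_mat m m" unfolding A_def using Ai by simp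
  have polyx: "(\<Sum>k<m. real_of_int (coeff P k) * x^k) + x^m = 0"
  proof -
    have "poly (map_poly of_int P) x = (\<Sum>k\<le>m. real_of_int (coeff P k) * x^k)"
      unfolding poly_altdef m_def by (simp add: degree_map_poly)
    also have "\<dots> = (\<Sum>k<m. real_of_int (coeff P k) * x^k) + x^m"
      using P1 m_def by (simp add: lessThan_Suc_atMost[symmetric])
    finally show ?thesis using P2 by simp
  qed
  have Av: "A *\<^sub>v v = x \<cdot>\<^sub>v v"
  proof (rule eq_vecI)
    fix j assume "j < dim_vec (x \<cdot>\<^sub>v v)"
    then have j: "j < m" unfolding v_def by simp
    have "(A *\<^sub>v v) $ j = (\<Sum>k<m. A $$ (j,k) * x^k)"
      using j A by (auto simp: v_def Matrix.scalar_prod_def lessThan_atLeast0 intro!: sum.cong)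
    also have "\<dots> = x * x^j"
    proof (cases "Suc j < m")
      case True
      have "(\<Sum>k<m. A $$ (j,k) * x^k) = (\<Sum>k<m. if k = Suc j then x^k else 0)"
        by (rule sum.cong, simp, use True j in \<open>simp add: A_def Ai_def\<close>)
      also have "\<dots> = x^Suc j" using True by simp
      finally show ?thesis by simp
    next
      case False
      then have jm: "Suc j = m" using j by simp
      have "(\<Sum>k<m. A $$ (j,k) * x^k) = - (\<Sum>k<m. real_of_int (coeff P k) * x^k)"
        by (simp add: sum_negf[symmetric], rule sum.cong, simp, use False j in \<open>simp add: A_def Ai_def\<close>)
      also have "\<dots> = x^m" using polyx by simp
      finally show ?thesis using jm by (metis power_Suc)
    qed
    finally show "(A *\<^sub>v v) $ j = (x \<cdot>\<^sub>v v) $ j" using j unfolding v_def by simp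
  qed (use A in \<open>simp add: v_def\<close>)
  have v0: "v \<noteq> 0\<^sub>v m"
  proof
    assume "v = 0\<^sub>v m"
    then have "v $ 0 = 0" using m0 by simp
    then show False using m0 unfolding v_def by simp
  qed
  have ev: "eigenvector A v x" unfolding eigenvector_def using A Av v0 by (simp add: v_def)
  have "A ^\<^sub>m n *\<^sub>v v = x^n \<cdot>\<^sub>v v" by (rule eigenvector_pow[OF A ev])
  moreover have "A ^\<^sub>m n = map_mat of_int (Ai ^\<^sub>m n)"
    unfolding A_def by (rule of_int_hom.mat_hom_pow[OF Ai, symmetric])
  ultimately have "eigenvector (map_mat of_int (Ai ^\<^sub>m n)) v (x^n)"
    using ev A Ai unfolding eigenvector_def by auto
  then have "eigenvalue (map_mat of_int (Ai ^\<^sub>m n) :: real mat) (x^n)" unfolding eigenvalue_def by blast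
  moreover have C: "(map_mat of_int (Ai ^\<^sub>m n) :: real mat) \<in> carrier_mat m m" using Ai by simp
  ultimately have "poly (char_poly (map_mat of_int (Ai ^\<^sub>m n) :: real mat)) (x^n) = 0"
    using eigenvalue_root_char_poly by blast
  moreover have "char_poly (map_mat of_int (Ai ^\<^sub>m n) :: real mat) = map_poly of_int (char_poly (Ai ^\<^sub>m n))"
    by (rule of_int_hom.char_poly_hom[of _ m]) (use Ai in simp)
  ultimately have r: "poly (map_poly of_int (char_poly (Ai ^\<^sub>m n))) (x^n) = 0"
    by simp
  have "lead_coeff (char_poly (Ai ^\<^sub>m n)) = 1"
    using degree_monic_char_poly[of "Ai ^\<^sub>m n" m] Ai by simp
  then show ?thesis using r unfolding alg_int_def by blast
qed

fun valc :: "real \<Rightarrow> rat \<times> rat \<times> rat \<Rightarrow> real" where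
  "valc t (a,b,c) = of_rat a + of_rat b * t + of_rat c * t^2"

fun mulc :: "rat \<Rightarrow> rat \<Rightarrow> rat \<times> rat \<times> rat \<Rightarrow> rat \<times> rat \<times> rat \<Rightarrow> rat \<times> rat \<times> rat" where
  "mulc p q (a,b,c) (a',b',c') = (a*a' + q*(b*c'+c*b'), a*b' + b*a' + p*(b*c'+c*b') + q*c*c',
      a*c' + b*b' + c*a' + p*c*c')"

fun ncub :: "'a::comm_ring_1 \<Rightarrow> 'a \<Rightarrow> 'a \<times> 'a \<times> 'a \<Rightarrow> 'a" where
  "ncub p q (a,b,c) = a*((a+c*p)*(a+c*p) - b*(b*p+c*q)) - c*q*(b*(a+c*p) - c*(b*p+c*q))
     + b*q*(b*b - c*(a+c*p))"

fun e0 :: "real \<Rightarrow> real \<Rightarrow> rat \<times> rat \<times> rat \<Rightarrow> real" where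
  "e0 t p (a,b,c) = (t*(of_rat c*t - of_rat b) - 2*(of_rat c*t^2 - of_rat a - of_rat c*p))^2
     + (3*t^2 - 4*p)*(of_rat c*t - of_rat b)^2"

lemma ncub_mult: "ncub p q (mulc p q X Y) = ncub p q X * ncub p q Y"
  by (cases X; cases Y) (simp add: algebra_simps)

lemma valc_mult: assumes "t^3 = of_int p*t + of_int q"
  shows "valc t (mulc (of_int p) (of_int q) X Y) = valc t X * valc t Y"
proof -
  obtain a b c where X: "X = (a,b,c)" by (cases X) auto
  obtain a' b' c' where Y: "Y = (a',b',c')" by (cases Y) auto
  have q: "of_int q = t^3 - of_int p * t" using assms by simp
  show ?thesis unfolding X Y
    by (simp add: of_rat_add of_rat_mult) (simp add: q algebra_simps power2_eq_square power3_eq_cube)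
qed

lemma e0_norm: assumes "t^3 = of_int p*t + of_int q"
  shows "valc t X * e0 t (of_int p) X = 4 * of_rat (ncub (of_int p) (of_int q) X)"
proof -
  obtain a b c where X: "X = (a,b,c)" by (cases X) auto
  have q: "of_int q = t^3 - of_int p * t" using assms by simp
  show ?thesis unfolding X
    by (simp add: of_rat_add of_rat_mult of_rat_diff) (simp add: q algebra_simps power2_eq_square power3_eq_cube)
qed


fun pwc :: "rat \<Rightarrow> rat \<Rightarrow> rat \<times> rat \<times> rat \<Rightarrow> nat \<Rightarrow> rat \<times> rat \<times> rat" where
  "pwc P Q X 0 = (1,0,0)" | "pwc P Q X (Suc n) = mulc P Q (pwc P Q X n) X"

lemma ncub_pwc: "ncub P Q (pwc P Q X n) = ncub P Q X ^ n"
  by (induction n) (simp_all add: ncub_mult ncub.simps)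

lemma ncub_scale: "ncub P Q (k*a, k*b, k*c) = k^3 * ncub P Q (a,b,c)"
  by (simp add: algebra_simps power3_eq_cube)

lemma ncub_of_int: "ncub (of_int p) (of_int q) (of_int a, of_int b, of_int c) = (of_int (ncub p q (a,b,c)) :: 'a::comm_ring_1)"
  by simp

lemma ncub_one: "ncub P Q (1,0,0) = 1" by simp

declare ncub.simps[simp del]

lemma e0_nonneg: assumes "3*t^2 - 4*p \<ge> 0" shows "e0 t p X \<ge> 0"
  using assms by (cases X) simp

lemma nidist_shift: assumes "\<bar>e\<bar> < 1/2" shows "nidist (of_int m + e) = e"
proof -
  have "\<lfloor>of_int m + e + 1/2\<rfloor> = m" by (rule floor_unique) (use assms in auto)
  then show ?thesis unfolding nidist_def by simp
qed

lemma sq_to_zero: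
  fixes X E :: "nat \<Rightarrow> real"
  assumes "eventually (\<lambda>n. (X n)^2 \<le> E n) sequentially" "E \<longlonglongrightarrow> 0"
  shows "X \<longlonglongrightarrow> 0"
proof -
  have "(\<lambda>n. sqrt (E n)) \<longlonglongrightarrow> 0" using tendsto_real_sqrt[OF assms(2)] by simp
  moreover have "eventually (\<lambda>n. \<bar>X n\<bar> \<le> sqrt (E n)) sequentially"
    using assms(1) by eventually_elim (metis real_sqrt_abs real_sqrt_le_mono)
  moreover have "eventually (\<lambda>n. 0 \<le> \<bar>X n\<bar>) sequentially" by simp
  ultimately have "(\<lambda>n. \<bar>X n\<bar>) \<longlonglongrightarrow> 0"
    using tendsto_sandwich[of "\<lambda>_. 0" "\<lambda>n. \<bar>X n\<bar>" sequentially "\<lambda>n. sqrt (E n)" 0] by simp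
  then show ?thesis by (simp add: tendsto_rabs_zero_iff)
qed

lemma irred_noprod:
  fixes f g h :: "rat poly"
  assumes "irreducible f" "f = g * h" "degree g > 0" "degree h > 0" shows False
proof -
  from irreducibleD[OF assms(1) assms(2)] have "is_unit g \<or> is_unit h" .
  moreover have "g \<noteq> 0" "h \<noteq> 0" using assms(3,4) by auto
  ultimately show False using assms(3,4) is_unit_iff_degree[OF \<open>g \<noteq> 0\<close>] is_unit_iff_degree[OF \<open>h \<noteq> 0\<close>] by auto
qed

lemma bounded_denom:
  fixes r :: rat and D :: int
  assumes D: "D > 0" and H: "\<forall>n\<ge>1. of_int D * r^n \<in> \<int>" shows "r \<in> \<int>"
proof -
  obtain s t where st: "quotient_of r = (s,t)" by (cases "quotient_of r")
  have t0: "t > 0" using quotient_of_denom_pos st by blast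
  have cop: "coprime s t" using quotient_of_coprime st by blast
  have r: "r = of_int s / of_int t" using quotient_of_div st by blast
  have "t = 1"
  proof (rule ccontr)
    assume "t \<noteq> 1"
    then have t2: "t \<ge> 2" using t0 by simp
    define n where "n = nat D"
    have n1: "n \<ge> 1" using D n_def by simp
    from H n1 obtain k where k: "of_int D * r^n = of_int k" by (meson Ints_cases)
    have "of_int D * of_int s^n = (of_int k * of_int t^n :: rat)"
      using k t0 unfolding r by (simp add: power_divide field_simps)
    then have eq: "D * s^n = k * t^n" by (metis of_int_eq_iff of_int_mult of_int_power)
    have "t^n dvd D * s^n" using eq by simp
    moreover have "coprime (t^n) (s^n)" using cop by (simp add: coprime_commute)
    ultimately have "t^n dvd D" using coprime_dvd_mult_left_iff by blast
    then have "t^n \<le> D" using D by (simp add: zdvd_imp_le)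
    moreover have "(2::int)^n \<le> t^n" using t2 by (simp add: power_mono)
    moreover have "int n < 2^n" using less_exp[of n] by (metis of_nat_less_iff of_nat_numeral of_nat_power)
    ultimately show False using n_def D by simp
  qed
  then show "r \<in> \<int>" using r by simp
qed

context
  fixes p q :: int and \<theta> :: real
  assumes irred: "irreducible ([:- of_int q, - of_int p, 0, 1:] :: rat poly)"
    and root: "\<theta>^3 - of_int p * \<theta> - of_int q = 0"
begin

lemma theta_irr: "\<theta> \<noteq> of_rat r"
proof
  assume th: "\<theta> = of_rat r"
  have "of_rat (r^3 - of_int p * r - of_int q) = (0::real)" using root th
    by (simp add: of_rat_diff of_rat_mult of_rat_power)
  then have qr: "of_int q = r^3 - of_int p * r" by simp
  have "([:- of_int q, - of_int p, 0, 1:] :: rat poly) = [:-r,1:] * [:r^2 - of_int p, r, 1:]"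
    by (simp add: qr algebra_simps power2_eq_square power3_eq_cube)
  then show False using irred_noprod[OF irred] by fastforce
qed

lemma lin_indep:
  assumes "of_rat r0 + of_rat r1 * \<theta> + of_rat r2 * \<theta>^2 = 0" shows "r0 = 0 \<and> r1 = 0 \<and> r2 = 0"
proof (cases "r2 = 0")
  case True
  show ?thesis
  proof (cases "r1 = 0")
    case True with \<open>r2=0\<close> assms show ?thesis by simp
  next
    case False
    have "\<theta> = of_rat (- r0 / r1)" using assms \<open>r2=0\<close> False
      by (simp add: of_rat_divide of_rat_minus field_simps)
    with theta_irr show ?thesis by blast
  qed
next
  case False
  define s where "s = - r1 / r2"
  define t where "t = - r0 / r2"
  have sq: "\<theta>^2 = of_rat s * \<theta> + of_rat t" using assms False unfolding s_def t_def
    by (simp add: of_rat_divide of_rat_minus field_simps)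
  have cube: "\<theta>^3 = (of_rat s^2 + of_rat t) * \<theta> + of_rat s * of_rat t"
  proof -
    have "\<theta>^3 = \<theta> * \<theta>^2" by (simp add: power2_eq_square power3_eq_cube)
    also have "\<dots> = \<theta> * (of_rat s * \<theta> + of_rat t)" by (simp only: sq)
    also have "\<dots> = of_rat s * \<theta>^2 + of_rat t * \<theta>" by (simp add: power2_eq_square algebra_simps)
    also have "\<dots> = of_rat s * (of_rat s * \<theta> + of_rat t) + of_rat t * \<theta>" by (simp only: sq)
    also have "\<dots> = (of_rat s^2 + of_rat t) * \<theta> + of_rat s * of_rat t" by (simp add: power2_eq_square algebra_simps)
    finally show ?thesis .
  qed
  have lin: "of_rat (s^2 + t - of_int p) * \<theta> + of_rat (s*t - of_int q) = 0"
    using cube root by (simp add: of_rat_add of_rat_diff of_rat_mult of_rat_power algebra_simps)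
  show ?thesis
  proof (cases "s^2 + t - of_int p = 0")
    case False
    then have A: "(of_rat (s^2 + t - of_int p) :: real) \<noteq> 0" by simp
    have "\<theta> = - of_rat (s*t - of_int q) / of_rat (s^2 + t - of_int p)" using lin A
      by (simp add: field_simps)
    then have "\<theta> = of_rat (-(s*t - of_int q) / (s^2 + t - of_int p))"
      by (metis of_rat_divide of_rat_minus minus_divide_left)
    with theta_irr show ?thesis by blast
  next
    case True
    then have "s*t - of_int q = 0" using lin by simp
    then have "([:- of_int q, - of_int p, 0, 1:] :: rat poly) = [:-t, -s, 1:] * [:s, 1:]"
      using True by (simp add: algebra_simps power2_eq_square)
    then show ?thesis using irred_noprod[OF irred] by fastforce
  qed
qed

lemma D_pos:
  assumes uniq: "\<forall>x::real. x^3 - of_int p * x - of_int q = 0 \<longrightarrow> x = \<theta>"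
  shows "3*\<theta>^2 - 4* of_int p > 0"
proof (rule ccontr)
  assume A: "\<not> ?thesis"
  define s where "s = sqrt (4* of_int p - 3*\<theta>^2)"
  have s2: "s^2 = 4* of_int p - 3*\<theta>^2" using A unfolding s_def by simp
  have q: "of_int q = \<theta>^3 - of_int p * \<theta>" using root by simp
  have "(-\<theta>+s)^3 - 4 * of_int p * (-\<theta>+s) - 8 * of_int q
      = - (\<theta>^3) + 3*\<theta>^2* s - 3*\<theta>* s^2 + s* s^2 + 4 * of_int p*\<theta> - 4 * of_int p * s - 8 * of_int q"
    by (simp add: power2_eq_square power3_eq_cube algebra_simps)
  also have "\<dots> = - (\<theta>^3) + 3*\<theta>^2* s - 3*\<theta>*(4* of_int p - 3*\<theta>^2) + s*(4* of_int p - 3*\<theta>^2) + 4 * of_int p*\<theta> - 4 * of_int p * s - 8 * (\<theta>^3 - of_int p * \<theta>)"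
    by (simp only: s2 q)
  also have "\<dots> = 0" by (simp add: power2_eq_square power3_eq_cube algebra_simps)
  finally have "(-\<theta>+s)^3 - 4 * of_int p * (-\<theta>+s) - 8 * of_int q = 0" .
  then have r1: "((-\<theta>+s)/2)^3 - of_int p * ((-\<theta>+s)/2) - of_int q = 0"
    by (simp add: field_simps power3_eq_cube)
  have "(-\<theta>-s)^3 - 4 * of_int p * (-\<theta>-s) - 8 * of_int q
      = - (\<theta>^3) - 3*\<theta>^2* s - 3*\<theta>* s^2 - s* s^2 + 4 * of_int p*\<theta> + 4 * of_int p * s - 8 * of_int q"
    by (simp add: power2_eq_square power3_eq_cube algebra_simps)
  also have "\<dots> = - (\<theta>^3) - 3*\<theta>^2* s - 3*\<theta>*(4* of_int p - 3*\<theta>^2) - s*(4* of_int p - 3*\<theta>^2) + 4 * of_int p*\<theta> + 4 * of_int p * s - 8 * (\<theta>^3 - of_int p * \<theta>)"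
    by (simp only: s2 q)
  also have "\<dots> = 0" by (simp add: power2_eq_square power3_eq_cube algebra_simps)
  finally have "(-\<theta>-s)^3 - 4 * of_int p * (-\<theta>-s) - 8 * of_int q = 0" .
  then have r2: "((-\<theta>-s)/2)^3 - of_int p * ((-\<theta>-s)/2) - of_int q = 0"
    by (simp add: field_simps power3_eq_cube)
  have "(-\<theta>+s)/2 = \<theta>" "(-\<theta>-s)/2 = \<theta>" using uniq r1 r2 by blast+
  then have "\<theta> = of_rat 0" by simp
  with theta_irr show False by blast
qed


lemma th3: "\<theta>^3 = of_int p * \<theta> + of_int q" using root by simp

lemma valc_inj: assumes "valc \<theta> X = valc \<theta> Y" shows "X = Y"
proof -
  obtain a b c where X: "X = (a,b,c)" by (cases X) auto
  obtain a' b' c' where Y: "Y = (a',b',c')" by (cases Y) auto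
  have "of_rat (a-a') + of_rat (b-b') * \<theta> + of_rat (c-c') * \<theta>^2 = 0"
    using assms by (simp add: X Y of_rat_diff algebra_simps)
  from lin_indep[OF this] show ?thesis by (simp add: X Y)
qed

lemma valc_pwc: "valc \<theta> (pwc (of_int p) (of_int q) X n) = valc \<theta> X ^ n"
  by (induction n) (simp_all add: valc_mult[OF th3])

lemma int_coords:
  assumes d_bound: "\<forall>x \<in> ring_of_integers \<theta>.
        \<exists>r0 r1 r2 :: int. x = (of_int r0 + of_int r1 * \<theta> + of_int r2 * \<theta>^2) / real d"
    and d: "d > 0" and y: "y \<in> ring_of_integers \<theta>" and Z: "valc \<theta> Z = y"
  shows "\<exists>r0 r1 r2 :: int. Z = (of_int r0 / of_nat d, of_int r1 / of_nat d, of_int r2 / of_nat d)"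
proof -
  obtain r0 r1 r2 :: int where r: "y = (of_int r0 + of_int r1 * \<theta> + of_int r2 * \<theta>^2) / real d"
    using d_bound y by blast
  have "valc \<theta> (of_int r0 / of_nat d, of_int r1 / of_nat d, of_int r2 / of_nat d) = (of_int r0 + of_int r1 * \<theta> + of_int r2 * \<theta>^2) / real d"
    by (simp add: of_rat_divide add_divide_distrib)
  then have "valc \<theta> Z = valc \<theta> (of_int r0 / of_nat d, of_int r1 / of_nat d, of_int r2 / of_nat d)"
    using Z r by simp
  then show ?thesis using valc_inj by blast
qed

lemma norm_int:
  assumes d_bound: "\<forall>x \<in> ring_of_integers \<theta>.
        \<exists>r0 r1 r2 :: int. x = (of_int r0 + of_int r1 * \<theta> + of_int r2 * \<theta>^2) / real d"
    and d: "d > 0" and y: "y \<in> ring_of_integers \<theta>" and X: "valc \<theta> X = y"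
  shows "ncub (of_int p) (of_int q) X \<in> \<int>"
proof -
  have "\<forall>n\<ge>1. of_int (int d^3) * ncub (of_int p) (of_int q) X ^ n \<in> \<int>"
  proof (intro allI impI)
    fix n :: nat assume n: "n \<ge> 1"
    obtain a b c where pw: "pwc (of_int p) (of_int q) X n = (a,b,c)" by (cases "pwc (of_int p) (of_int q) X n") auto
    have yn: "y^n = valc \<theta> (a,b,c)" using valc_pwc[of X n] X pw by simp
    have "y^n \<in> numfield \<theta>" unfolding numfield_def yn
      by (rule CollectI, rule exI[of _ a], rule exI[of _ b], rule exI[of _ c]) simp
    have "alg_int y" using y unfolding ring_of_integers_def by simp
    then have "alg_int (y^n)" by (rule alg_int_pow)
    with \<open>y^n \<in> numfield \<theta>\<close> have yO: "y^n \<in> ring_of_integers \<theta>" unfolding ring_of_integers_def by simp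
    have "valc \<theta> (pwc (of_int p) (of_int q) X n) = y^n" using valc_pwc[of X n] X by simp
    then obtain r0 r1 r2 :: int where rr: "pwc (of_int p) (of_int q) X n = (of_int r0 / of_nat d, of_int r1 / of_nat d, of_int r2 / of_nat d)"
      using int_coords[OF d_bound d yO] by blast
    have "ncub (of_int p) (of_int q) X ^ n = ncub (of_int p) (of_int q) (of_int r0 / of_nat d, of_int r1 / of_nat d, of_int r2 / of_nat d)"
      using ncub_pwc[of "of_int p" "of_int q" X n] rr by (simp del: ncub_pwc)
    have e: "\<And>r::int. of_nat d * (of_int r / of_nat d) = (of_int r :: rat)" using d by simp
    have "of_int (int d^3) * ncub (of_int p) (of_int q) X ^ n
       = of_nat d ^ 3 * ncub (of_int p) (of_int q) (of_int r0 / of_nat d, of_int r1 / of_nat d, of_int r2 / of_nat d)"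
      using \<open>ncub (of_int p) (of_int q) X ^ n = _\<close> by simp
    also have "\<dots> = ncub (of_int p) (of_int q) (of_nat d * (of_int r0 / of_nat d), of_nat d * (of_int r1 / of_nat d), of_nat d * (of_int r2 / of_nat d))"
      by (simp only: ncub_scale)
    also have "\<dots> = ncub (of_int p) (of_int q) (of_int r0, of_int r1, of_int r2)" by (simp only: e)
    also have "\<dots> = of_int (ncub p q (r0, r1, r2))" by (rule ncub_of_int)
    finally show "of_int (int d^3) * ncub (of_int p) (of_int q) X ^ n \<in> \<int>" by simp
  qed
  then show ?thesis by (intro bounded_denom[of "int d^3"]) (use d in auto)
qed

end

theorem mainTheorem18:
  fixes p q :: int and \<theta> lam :: real and d :: nat and a b c :: "nat \<Rightarrow> rat"
  assumes irred: "irreducible ([:- of_int q, - of_int p, 0, 1:] :: rat poly)"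
    and root: "\<theta>^3 - of_int p * \<theta> - of_int q = 0"
    and unique_real_root: "\<forall>x::real. x^3 - of_int p * x - of_int q = 0 \<longrightarrow> x = \<theta>"
    and d_pos: "d > 0"
    and d_bound: "\<forall>x \<in> ring_of_integers \<theta>.
        \<exists>r0 r1 r2 :: int. x = (of_int r0 + of_int r1 * \<theta> + of_int r2 * \<theta>^2) / real d"
    and unit: "lam \<in> ring_of_integers \<theta>" "inverse lam \<in> ring_of_integers \<theta>"
    and lam_gt: "lam > 1"
    and abc: "\<forall>n\<ge>1. lam^n = of_rat (a n) + of_rat (b n) * \<theta> + of_rat (c n) * \<theta>^2"
  shows "(\<forall>\<^sub>F n in sequentially. of_nat d * c n > 0) \<and>
    ((\<lambda>n. let k = real_of_rat (of_nat d * c n);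
              u = sqrt k * nidist (k * \<theta>);
              v = sqrt k * nidist (k * \<theta>^2)
          in (\<theta> * u - 2 * v)^2 + (3 * \<theta>^2 - 4 * of_int p) * u^2)
      \<longlonglongrightarrow> 4 * real d ^ 3 / (3 * \<theta>^2 - of_int p))"
proof -
  define P :: rat where "P = of_int p"
  define Q :: rat where "Q = of_int q"
  note th3 = th3[OF irred root]
  have D: "3*\<theta>^2 - 4 * of_int p > 0" using D_pos[OF irred root unique_real_root] .
  have sq0: "\<theta>^2 \<ge> 0" by simp
  have F: "3*\<theta>^2 - of_int p > 0" using D sq0 by (smt (verit))
  have lam0: "lam > 0" using lam_gt by simp
  obtain Xl where Xl: "valc \<theta> Xl = lam"
  proof -
    from unit(1) obtain r0 r1 r2 where "lam = of_rat r0 + of_rat r1 * \<theta> + of_rat r2 * \<theta>^2"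
      unfolding ring_of_integers_def numfield_def by blast
    then have "valc \<theta> (r0,r1,r2) = lam" by simp
    then show ?thesis using that by blast
  qed
  obtain Xm where Xm: "valc \<theta> Xm = inverse lam"
  proof -
    from unit(2) obtain r0 r1 r2 where "inverse lam = of_rat r0 + of_rat r1 * \<theta> + of_rat r2 * \<theta>^2"
      unfolding ring_of_integers_def numfield_def by blast
    then have "valc \<theta> (r0,r1,r2) = inverse lam" by simp
    then show ?thesis using that by blast
  qed
  have nl: "ncub P Q Xl \<in> \<int>" unfolding P_def Q_def by (rule norm_int[OF irred root d_bound d_pos unit(1) Xl])
  have nm: "ncub P Q Xm \<in> \<int>" unfolding P_def Q_def by (rule norm_int[OF irred root d_bound d_pos unit(2) Xm])
  have "valc \<theta> (mulc P Q Xl Xm) = valc \<theta> (1,0,0)"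
    unfolding P_def Q_def valc_mult[OF th3] Xl Xm using lam0 by simp
  then have "mulc P Q Xl Xm = (1,0,0)" by (rule valc_inj[OF irred root])
  then have prod1: "ncub P Q Xl * ncub P Q Xm = 1" by (metis ncub_mult ncub_one)
  have nonneg: "ncub P Q X \<ge> 0" if "valc \<theta> X > 0" for X
  proof -
    have "valc \<theta> X * e0 \<theta> (of_int p) X = 4 * of_rat (ncub P Q X)"
      unfolding P_def Q_def by (rule e0_norm[OF th3])
    moreover have "e0 \<theta> (of_int p) X \<ge> 0" by (rule e0_nonneg) (use D in simp)
    ultimately have "of_rat (ncub P Q X) \<ge> (0::real)" using that
      by (metis mult_nonneg_nonneg less_imp_le zero_le_mult_iff mult_le_0_iff zero_less_numeral not_le mult_pos_pos)
    then show ?thesis by simp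
  qed
  have nl0: "ncub P Q Xl \<ge> 0" using nonneg Xl lam0 by simp
  have nm0: "ncub P Q Xm \<ge> 0" using nonneg Xm lam0 by simp
  have nl1: "ncub P Q Xl = 1"
  proof -
    obtain i where i: "ncub P Q Xl = of_int i" using nl by (auto elim: Ints_cases)
    obtain j where j: "ncub P Q Xm = of_int j" using nm by (auto elim: Ints_cases)
    have "i * j = 1" using prod1 i j by (metis of_int_eq_1_iff of_int_mult)
    moreover have "i \<ge> 0" using nl0 i by simp
    ultimately have "i = 1" using pos_zmult_eq_1_iff[of i j] by (cases "i = 0") auto
    then show ?thesis using i by simp
  qed
  have coords: "valc \<theta> (a n, b n, c n) = lam^n" if "n \<ge> 1" for n using abc that by simp
  have normn: "ncub P Q (a n, b n, c n) = 1" if "n \<ge> 1" for n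
  proof -
    have "valc \<theta> (a n, b n, c n) = valc \<theta> (pwc P Q Xl n)"
      using coords[OF that] valc_pwc[OF irred root, of Xl n] Xl unfolding P_def Q_def by simp
    then have "(a n, b n, c n) = pwc P Q Xl n" by (rule valc_inj[OF irred root])
    then show ?thesis using ncub_pwc[of P Q Xl n] nl1 by simp
  qed
  have e0n: "e0 \<theta> (of_int p) (a n, b n, c n) = 4 / lam^n" if "n \<ge> 1" for n
  proof -
    have "valc \<theta> (a n, b n, c n) * e0 \<theta> (of_int p) (a n, b n, c n) = 4 * of_rat (ncub P Q (a n, b n, c n))"
      unfolding P_def Q_def by (rule e0_norm[OF th3])
    then have "lam^n * e0 \<theta> (of_int p) (a n, b n, c n) = 4" using coords[OF that] normn[OF that] by simp
    then show ?thesis using lam0 by (simp add: field_simps)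
  qed
  have intc: "\<exists>r0 r1 r2 :: int. (a n, b n, c n) = (of_int r0 / of_nat d, of_int r1 / of_nat d, of_int r2 / of_nat d)"
    if "n \<ge> 1" for n
  proof -
    have "lam^n \<in> numfield \<theta>" unfolding numfield_def coords[OF that, symmetric]
      by (rule CollectI, rule exI[of _ "a n"], rule exI[of _ "b n"], rule exI[of _ "c n"]) simp
    moreover have "alg_int lam" using unit(1) unfolding ring_of_integers_def by simp
    then have "alg_int (lam^n)" by (rule alg_int_pow)
    ultimately have "lam^n \<in> ring_of_integers \<theta>" unfolding ring_of_integers_def by simp
    then show ?thesis using int_coords[OF irred root d_bound d_pos _ coords[OF that]] by blast
  qed
  define A where "A n = real_of_rat (a n)" for n
  define B where "B n = real_of_rat (b n)" for n
  define C where "C n = real_of_rat (c n)" for n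
  define U where "U n = C n * \<theta> - B n" for n
  define V where "V n = C n * \<theta>^2 - A n - C n * of_int p" for n
  define W where "W n = \<theta> * U n - 2 * V n" for n
  define Dd where "Dd = 3*\<theta>^2 - 4 * of_int p"
  define F0 where "F0 = 3*\<theta>^2 - of_int p"
  define R where "R n = \<theta> * U n + V n" for n
  have Dd: "Dd > 0" using D unfolding Dd_def .
  have F0: "F0 > 0" using F unfolding F0_def .
  have E: "W n ^2 + Dd * U n ^2 = 4 / lam^n" if "n \<ge> 1" for n
    using e0n[OF that] unfolding W_def U_def V_def Dd_def A_def B_def C_def by simp
  have RC: "F0 * C n = lam^n + R n" if "n \<ge> 1" for n
  proof -
    have "lam^n = A n + B n * \<theta> + C n * \<theta>^2" using coords[OF that] unfolding A_def B_def C_def by simp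
    then show ?thesis unfolding F0_def R_def U_def V_def by (simp add: algebra_simps power2_eq_square)
  qed
  have inv0: "(\<lambda>n. inverse lam ^ n) \<longlonglongrightarrow> 0"
    by (rule LIMSEQ_realpow_zero) (use lam_gt in \<open>auto simp: inverse_less_1_iff\<close>)
  have lim4: "(\<lambda>n. 4 / lam^n) \<longlonglongrightarrow> 0"
  proof -
    have "(\<lambda>n. 4 * inverse lam ^ n) \<longlonglongrightarrow> 4 * 0" by (intro tendsto_mult tendsto_const inv0)
    then show ?thesis by (simp add: divide_inverse power_inverse)
  qed
  have limE: "(\<lambda>n. W n ^2 + Dd * U n ^2) \<longlonglongrightarrow> 0"
    by (rule Lim_transform_eventually[OF lim4]) (use E in \<open>auto simp: eventually_sequentially intro!: exI[of _ 1]\<close>)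
  have U0: "U \<longlonglongrightarrow> 0"
  proof (rule sq_to_zero)
    show "(\<lambda>n. (W n ^2 + Dd * U n ^2) / Dd) \<longlonglongrightarrow> 0" using tendsto_divide_zero[OF limE] by simp
    show "\<forall>\<^sub>F n in sequentially. (U n)^2 \<le> (W n ^2 + Dd * U n ^2) / Dd"
      using Dd by (auto simp: field_simps)
  qed
  have W0: "W \<longlonglongrightarrow> 0"
    by (rule sq_to_zero[OF _ limE]) (use Dd in \<open>auto intro: always_eventually\<close>)
  have V0: "V \<longlonglongrightarrow> 0"
  proof -
    have "(\<lambda>n. (\<theta> * U n - W n) / 2) \<longlonglongrightarrow> (\<theta> * 0 - 0) / 2" by (intro tendsto_intros U0 W0) simp_all
    moreover have "(\<lambda>n. (\<theta> * U n - W n) / 2) = V" unfolding W_def by auto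
    ultimately show ?thesis by simp
  qed
  have R0: "R \<longlonglongrightarrow> 0"
  proof -
    have "(\<lambda>n. \<theta> * U n + V n) \<longlonglongrightarrow> \<theta> * 0 + 0" by (intro tendsto_intros U0 V0)
    then show ?thesis unfolding R_def by simp
  qed
  have ratio: "(\<lambda>n. C n / lam^n) \<longlonglongrightarrow> 1 / F0"
  proof -
    have "(\<lambda>n. (1 + R n * inverse lam ^ n) / F0) \<longlonglongrightarrow> (1 + 0 * 0) / F0"
      by (intro tendsto_divide tendsto_add tendsto_mult tendsto_const R0 inv0) (use F0 in simp)
    then have L: "(\<lambda>n. (1 + R n * inverse lam ^ n) / F0) \<longlonglongrightarrow> 1 / F0" by simp
    show ?thesis
    proof (rule Lim_transform_eventually[OF L])
      show "\<forall>\<^sub>F n in sequentially. (1 + R n * inverse lam ^ n) / F0 = C n / lam ^ n"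
        unfolding eventually_sequentially
      proof (intro exI allI impI)
        fix n :: nat assume n: "n \<ge> 1"
        have "(1 + R n * inverse lam ^ n) / F0 = (lam^n + R n) / (F0 * lam^n)"
          using lam0 by (simp add: field_simps power_inverse)
        also have "\<dots> = (F0 * C n) / (F0 * lam^n)" using RC[OF n] by simp
        also have "\<dots> = C n / lam^n" using F0 by simp
        finally show "(1 + R n * inverse lam ^ n) / F0 = C n / lam ^ n" .
      qed
    qed
  qed
  have evR: "\<forall>\<^sub>F n in sequentially. \<bar>R n\<bar> < 1"
    using tendstoD[OF R0, of 1] by simp
  have evC: "\<forall>\<^sub>F n in sequentially. C n > 0"
  proof -
    have "\<forall>\<^sub>F n in sequentially. n \<ge> 1 \<and> \<bar>R n\<bar> < 1"
      using evR eventually_ge_at_top[of 1] by eventually_elim simp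
    then show ?thesis
    proof eventually_elim
      case (elim n)
      then have "F0 * C n = lam^n + R n" using RC by simp
      moreover have "lam^n \<ge> 1" using lam_gt by simp
      ultimately have "F0 * C n > 0" using elim by linarith
      then show "C n > 0" using F0 by (simp add: zero_less_mult_iff)
    qed
  qed
  have part1: "\<forall>\<^sub>F n in sequentially. of_nat d * c n > 0"
    using evC
  proof eventually_elim
    case (elim n)
    then have "c n > 0" unfolding C_def by simp
    then show ?case using d_pos by simp
  qed
  have dU: "\<forall>\<^sub>F n in sequentially. \<bar>real d * U n\<bar> < 1/2"
  proof -
    have "(\<lambda>n. real d * U n) \<longlonglongrightarrow> real d * 0" by (intro tendsto_intros U0)
    then show ?thesis using tendstoD[of "\<lambda>n. real d * U n" 0 sequentially "1/2"] by simp
  qed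
  have dV: "\<forall>\<^sub>F n in sequentially. \<bar>real d * V n\<bar> < 1/2"
  proof -
    have "(\<lambda>n. real d * V n) \<longlonglongrightarrow> real d * 0" by (intro tendsto_intros V0)
    then show ?thesis using tendstoD[of "\<lambda>n. real d * V n" 0 sequentially "1/2"] by simp
  qed
  have limM: "(\<lambda>n. 4 * real d ^ 3 * (C n / lam^n)) \<longlonglongrightarrow> 4 * real d ^ 3 * (1 / F0)"
    by (intro tendsto_intros ratio)
  have limM': "(\<lambda>n. 4 * real d ^ 3 * (C n / lam^n)) \<longlonglongrightarrow> 4 * real d ^ 3 / (3 * \<theta>^2 - of_int p)"
    using limM unfolding F0_def by simp
  have part2: "(\<lambda>n. let k = real_of_rat (of_nat d * c n);
              u = sqrt k * nidist (k * \<theta>);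
              v = sqrt k * nidist (k * \<theta>^2)
          in (\<theta> * u - 2 * v)^2 + (3 * \<theta>^2 - 4 * of_int p) * u^2)
      \<longlonglongrightarrow> 4 * real d ^ 3 / (3 * \<theta>^2 - of_int p)"
  proof (rule Lim_transform_eventually[OF limM'])
    have "\<forall>\<^sub>F n in sequentially. n \<ge> 1 \<and> C n > 0 \<and> \<bar>real d * U n\<bar> < 1/2 \<and> \<bar>real d * V n\<bar> < 1/2"
      using evC dU dV eventually_ge_at_top[of 1] by eventually_elim simp
    then show "\<forall>\<^sub>F n in sequentially. 4 * real d ^ 3 * (C n / lam^n) = (let k = real_of_rat (of_nat d * c n);
              u = sqrt k * nidist (k * \<theta>);
              v = sqrt k * nidist (k * \<theta>^2)
          in (\<theta> * u - 2 * v)^2 + (3 * \<theta>^2 - 4 * of_int p) * u^2)"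
    proof eventually_elim
      case (elim n)
      then have n: "n \<ge> 1" and Cp: "C n > 0" and hU: "\<bar>real d * U n\<bar> < 1/2" and hV: "\<bar>real d * V n\<bar> < 1/2"
        by auto
      obtain r0 r1 r2 :: int where rr: "(a n, b n, c n) = (of_int r0 / of_nat d, of_int r1 / of_nat d, of_int r2 / of_nat d)"
        using intc[OF n] by blast
      have dA: "real d * A n = of_int r0" using rr d_pos unfolding A_def by (simp add: of_rat_divide)
      have dB: "real d * B n = of_int r1" using rr d_pos unfolding B_def by (simp add: of_rat_divide)
      have dC: "real d * C n = of_int r2" using rr d_pos unfolding C_def by (simp add: of_rat_divide)
      define k where "k = real_of_rat (of_nat d * c n)"
      have k: "k = real d * C n" unfolding k_def C_def by (simp add: of_rat_mult)
      have kpos: "k > 0" using k Cp d_pos by simp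
      have k1: "k * \<theta> = of_int r1 + real d * U n" unfolding k U_def using dB by (simp add: algebra_simps)
      have "k * \<theta>^2 = real d * A n + (real d * C n) * of_int p + real d * V n"
        unfolding k V_def by (simp add: algebra_simps)
      then have k2: "k * \<theta>^2 = of_int (r0 + r2 * p) + real d * V n"
        using dA dC by simp
      have n1: "nidist (k * \<theta>) = real d * U n" unfolding k1 by (rule nidist_shift[OF hU])
      have n2: "nidist (k * \<theta>^2) = real d * V n" unfolding k2 by (rule nidist_shift[OF hV])
      define s where "s = sqrt k"
      have s2: "s^2 = k" unfolding s_def using kpos by simp
      have "(let k = real_of_rat (of_nat d * c n);
              u = sqrt k * nidist (k * \<theta>);
              v = sqrt k * nidist (k * \<theta>^2)
          in (\<theta> * u - 2 * v)^2 + (3 * \<theta>^2 - 4 * of_int p) * u^2)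
          = (\<theta> * (s * (real d * U n)) - 2 * (s * (real d * V n)))^2 + Dd * (s * (real d * U n))^2"
        unfolding Let_def k_def[symmetric] s_def[symmetric] n1 n2 Dd_def by simp
      also have "\<dots> = s^2 * (real d)^2 * (W n ^2 + Dd * U n ^2)"
        unfolding W_def by (simp add: power2_eq_square algebra_simps)
      also have "\<dots> = k * (real d)^2 * (4 / lam^n)" using s2 E[OF n] by simp
      also have "\<dots> = 4 * real d ^ 3 * (C n / lam^n)" unfolding k by (simp add: power2_eq_square power3_eq_cube field_simps)
      finally show ?case by simp
    qed
  qed
  show ?thesis using part1 part2 by blast
qed

end
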